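(* Let $\alpha\in(0,1]$, $M>0$, let $P_W$ be the uniform distribution on $[0,1]$ and let $R_\gamma$ be the Poisson distribution with mean $\gamma\in J=(0,+\infty)$. Then for all $n\ge1$, $$\mathcal R_n(\mathcal H_\alpha(M))\ge\frac{1-e^{-1}}{144}\left[\left(\frac{3M^{1/\alpha}}{2^{4+\alpha+3/\alpha}n}\right)^{\frac{\alpha}{1+\alpha}}\wedge\frac M8\wedge\Big(1+\frac{\sqrt3}{2}\Big)\right].$$
   Context: $\mathcal H_\alpha(M)$ is the set of functions $\gamma:[0,1]\to(0,+\infty)$ with $|\gamma(x)-\gamma(y)|\le M|x-y|^\alpha$ for all $x,y$. Data: $X_i=(W_i,Y_i)$, $i\le n$, i.i.d., $W_i\sim P_W$ and $Y_i\mid W_i=w$ Poisson with mean $\gamma^\star(w)$. $\mathcal R_n(\mathcal H_\alpha(M))=\inf_{\widetilde\gamma}\sup_{\gamma^\star\in\mathcal H_\alpha(M)}\mathbb E[h^2(R_{\gamma^\star},R_{\widetilde\gamma})]$, the infimum over all estimators $\widetilde\gamma$ based on $X_1,\ldots,X_n$ with values in functions $[0,1]\to(0,\infty)$, where $h^2(R_\gamma,R_{\gamma'})=\int_0^1h^2(R_{\gamma(w)},R_{\gamma'(w)})dP_W(w)$ and $h$ is the Hellinger distance $h^2(P,R)=\frac12\int(\sqrt p-\sqrt r)^2d\mu$. *)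

theory Defs
  imports "HOL-Probability.Probability"
begin

text \<open>Hoelder class H_alpha(M): positive functions on [0,1] (represented as real functions;
  only their values on [0,1] matter).\<close>
definition holder_class :: "real \<Rightarrow> real \<Rightarrow> (real \<Rightarrow> real) set" where
  "holder_class \<alpha> M = {\<gamma>. (\<forall>x\<in>{0..1}. 0 < \<gamma> x) \<and>
      (\<forall>x\<in>{0..1}. \<forall>y\<in>{0..1}. \<bar>\<gamma> x - \<gamma> y\<bar> \<le> M * \<bar>x - y\<bar> powr \<alpha>)}"

definition hellinger_sq :: "nat pmf \<Rightarrow> nat pmf \<Rightarrow> real" where
  "hellinger_sq p q = 1/2 * (\<Sum>k. (sqrt (pmf p k) - sqrt (pmf q k))^2)"

definition PW :: "real measure" where
  "PW = uniform_measure lborel {0..1}"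

definition poisson_loss :: "(real \<Rightarrow> real) \<Rightarrow> (real \<Rightarrow> real) \<Rightarrow> ennreal" where
  "poisson_loss \<gamma> \<gamma>' = (\<integral>\<^sup>+ w. ennreal (hellinger_sq (poisson_pmf (\<gamma> w)) (poisson_pmf (\<gamma>' w))) \<partial>PW)"

text \<open>Law of one observation X = (W,Y): W ~ P_W, Y | W = w ~ Poisson(gamma w).\<close>
definition obs_law :: "(real \<Rightarrow> real) \<Rightarrow> (real \<times> nat) measure" where
  "obs_law \<gamma> = density (lborel \<Otimes>\<^sub>M count_space UNIV)
      (\<lambda>(w, k). indicator {0..1} w * ennreal (pmf (poisson_pmf (\<gamma> w)) k))"

definition data_space :: "nat \<Rightarrow> (nat \<Rightarrow> real \<times> nat) measure" where
  "data_space n = PiM {..<n} (\<lambda>_. borel \<Otimes>\<^sub>M count_space UNIV)"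

definition estimators :: "nat \<Rightarrow> ((nat \<Rightarrow> real \<times> nat) \<Rightarrow> real \<Rightarrow> real) set" where
  "estimators n = {est.
      (\<lambda>(x, w). est x w) \<in> borel_measurable (data_space n \<Otimes>\<^sub>M borel) \<and>
      (\<forall>x\<in>space (data_space n). \<forall>w\<in>{0..1}. 0 < est x w)}"

definition risk :: "nat \<Rightarrow> (real \<Rightarrow> real) \<Rightarrow> ((nat \<Rightarrow> real \<times> nat) \<Rightarrow> real \<Rightarrow> real) \<Rightarrow> ennreal" where
  "risk n \<gamma> est = (\<integral>\<^sup>+ x. poisson_loss \<gamma> (est x) \<partial>(PiM {..<n} (\<lambda>_. obs_law \<gamma>)))"

definition minimax_risk :: "nat \<Rightarrow> (real \<Rightarrow> real) set \<Rightarrow> ennreal" where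
  "minimax_risk n H = (\<Sqinter>est\<in>estimators n. \<Squnion>\<gamma>\<in>H. risk n \<gamma> est)"

end

theory Submission
  imports Defs
begin

definition pp :: "real \<Rightarrow> nat \<Rightarrow> real" where
  "pp r k = r ^ k / fact k * exp (-r)"

definition hc :: "real \<Rightarrow> real \<Rightarrow> real" where
  "hc a b = 1 - exp (-((sqrt a - sqrt b)^2) / 2)"

lemma pmf_poisson_pp: "0 < r \<Longrightarrow> pmf (poisson_pmf r) k = pp r k"
  by (simp add: pp_def)

lemma pp_nonneg: "0 \<le> r \<Longrightarrow> 0 \<le> pp r k"
  by (simp add: pp_def)

lemma exp_sums_real: "(\<lambda>k. (x::real) ^ k / fact k) sums exp x"
  using exp_converges[of x] by (simp add: scaleR_conv_of_real divide_inverse mult.commute)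

lemma pp_sums: "(\<lambda>k. pp r k) sums 1"
proof -
  have "(\<lambda>k. r ^ k / fact k * exp (-r)) sums (exp r * exp (-r))"
    by (rule sums_mult2[OF exp_sums_real])
  then show ?thesis by (simp add: pp_def exp_minus_inverse)
qed

lemma sqrt_pp: assumes "0 \<le> a" "0 \<le> b"
  shows "sqrt (pp a k) * sqrt (pp b k) = (sqrt (a*b)) ^ k / fact k * exp (-(a+b)/2)"
proof -
  have e: "sqrt (exp (-a)) = exp (-a/2)" for a :: real
    by (metis exp_ge_zero real_sqrt_unique power2_eq_square exp_add[symmetric] field_sum_of_halves)
  have "sqrt (pp a k) * sqrt (pp b k) = sqrt a ^ k * sqrt b ^ k / fact k * (exp (-a/2) * exp (-b/2))"
    using assms by (simp add: pp_def real_sqrt_mult real_sqrt_divide real_sqrt_power e)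
  also have "\<dots> = (sqrt (a*b)) ^ k / fact k * exp (-(a+b)/2)"
    by (simp add: real_sqrt_mult power_mult_distrib exp_add[symmetric] field_simps)
  finally show ?thesis .
qed

lemma hell_sums: assumes "0 \<le> a" "0 \<le> b"
  shows "(\<lambda>k. (sqrt (pp a k) - sqrt (pp b k))^2) sums (2 * hc a b)"
proof -
  have s: "(\<lambda>k. sqrt (pp a k) * sqrt (pp b k)) sums (exp (sqrt (a*b)) * exp (-(a+b)/2))"
    unfolding sqrt_pp[OF assms] by (rule sums_mult2[OF exp_sums_real])
  have eq: "(sqrt (pp a k) - sqrt (pp b k))^2 = pp a k + pp b k - 2 * (sqrt (pp a k) * sqrt (pp b k))" for k
    using assms by (simp add: power2_diff pp_nonneg)
  have "(\<lambda>k. pp a k + pp b k - 2 * (sqrt (pp a k) * sqrt (pp b k))) sums (1 + 1 - 2 * (exp (sqrt (a*b)) * exp (-(a+b)/2)))"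
    by (intro sums_diff sums_add pp_sums sums_mult s)
  moreover have "1 + 1 - 2 * (exp (sqrt (a*b)) * exp (-(a+b)/2)) = 2 * hc a b"
  proof -
    have "(sqrt a - sqrt b)^2 = a + b - 2 * sqrt (a*b)"
      using assms by (simp add: power2_diff real_sqrt_mult)
    then have "-((sqrt a - sqrt b)^2)/2 = sqrt (a*b) + (-(a+b)/2)" by simp
    then show ?thesis by (simp add: hc_def exp_add[symmetric])
  qed
  ultimately show ?thesis unfolding eq by simp
qed

lemma hellinger_poisson: assumes "0 < a" "0 < b"
  shows "hellinger_sq (poisson_pmf a) (poisson_pmf b) = hc a b"
proof -
  have "(\<lambda>k. (sqrt (pmf (poisson_pmf a) k) - sqrt (pmf (poisson_pmf b) k))^2) = (\<lambda>k. (sqrt (pp a k) - sqrt (pp b k))^2)"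
    using assms by (simp only: pmf_poisson_pp)
  then have "hellinger_sq (poisson_pmf a) (poisson_pmf b) = 1/2 * (\<Sum>k. (sqrt (pp a k) - sqrt (pp b k))^2)"
    unfolding hellinger_sq_def by (simp only:)
  also have "\<dots> = hc a b"
    using sums_unique[OF hell_sums[of a b]] assms by simp
  finally show ?thesis .
qed

lemma hc_quasi_tri: assumes "0 \<le> a" "0 \<le> b" "0 \<le> e"
  shows "hc a b \<le> 2 * (hc a e + hc b e)"
proof -
  let ?x = "\<lambda>k. sqrt (pp a k)" and ?y = "\<lambda>k. sqrt (pp b k)" and ?z = "\<lambda>k. sqrt (pp e k)"
  have S: "(\<lambda>k. 2 * ((?x k - ?z k)^2 + (?y k - ?z k)^2)) sums (2 * (2 * hc a e + 2 * hc b e))"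
    by (intro sums_mult sums_add hell_sums assms)
  have le: "(?x k - ?y k)^2 \<le> 2 * ((?x k - ?z k)^2 + (?y k - ?z k)^2)" for k
  proof -
    have "2 * ((?x k - ?z k)^2 + (?y k - ?z k)^2) - (?x k - ?y k)^2 = (?x k + ?y k - 2 * ?z k)^2"
      by (simp add: power2_eq_square algebra_simps)
    then show ?thesis by (metis diff_ge_0_iff_ge zero_le_power2)
  qed
  have "2 * hc a b \<le> 2 * (2 * hc a e + 2 * hc b e)"
    by (rule sums_le[OF le hell_sums[OF assms(1,2)] S])
  then show ?thesis by simp
qed

lemma meas_pp: 
  assumes [measurable]: "u \<in> borel_measurable borel" "r \<in> borel_measurable borel"
  shows "(\<lambda>(w,k). ennreal (u w * pp (r w) k)) \<in> borel_measurable (lborel \<Otimes>\<^sub>M count_space UNIV)"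
  unfolding pp_def by measurable

lemma prod_indicator_ennreal: "finite I \<Longrightarrow> (\<Prod>i\<in>I. indicator (A i) (x i) :: ennreal) = indicator (Pi I A) x"
  by (induction I rule: finite_induct) (auto simp: indicator_def)

lemma PiM_density:
  fixes N :: "'a measure" and f :: "'a \<Rightarrow> ennreal"
  assumes sf: "sigma_finite_measure N" and f[measurable]: "f \<in> borel_measurable N"
    and sf2: "sigma_finite_measure (density N f)" and I: "finite I"
  shows "PiM I (\<lambda>_. density N f) = density (PiM I (\<lambda>_. N)) (\<lambda>x. \<Prod>i\<in>I. f (x i))"
proof -
  interpret D: product_sigma_finite "\<lambda>_. density N f" using sf2 by (simp add: product_sigma_finite_def)
  interpret P: product_sigma_finite "\<lambda>_. N" using sf by (simp add: product_sigma_finite_def)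
  have "density (PiM I (\<lambda>_. N)) (\<lambda>x. \<Prod>i\<in>I. f (x i)) = PiM I (\<lambda>_. density N f)"
  proof (rule D.PiM_eqI[OF I])
    show "sets (density (PiM I (\<lambda>_. N)) (\<lambda>x. \<Prod>i\<in>I. f (x i))) = sets (PiM I (\<lambda>_. density N f))"
      unfolding sets_density by (intro sets_PiM_cong) auto
  next
    fix A assume A: "\<And>i. i \<in> I \<Longrightarrow> A i \<in> sets (density N f)"
    then have A': "\<And>i. i \<in> I \<Longrightarrow> A i \<in> sets N" by simp
    have "emeasure (density (PiM I (\<lambda>_. N)) (\<lambda>x. \<Prod>i\<in>I. f (x i))) (PiE I A)
        = (\<integral>\<^sup>+x. (\<Prod>i\<in>I. f (x i)) * indicator (PiE I A) x \<partial>PiM I (\<lambda>_. N))"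
      using A' by (intro emeasure_density) (auto intro!: sets_PiM_I_finite I)
    also have "\<dots> = (\<integral>\<^sup>+x. (\<Prod>i\<in>I. f (x i) * indicator (A i) (x i)) \<partial>PiM I (\<lambda>_. N))"
    proof (rule nn_integral_cong)
      fix x assume "x \<in> space (PiM I (\<lambda>_. N))"
      then have "x \<in> extensional I" by (auto simp: space_PiM PiE_def)
      then have "indicator (PiE I A) x = (indicator (Pi I A) x :: ennreal)"
        by (auto simp: indicator_def PiE_def)
      then show "(\<Prod>i\<in>I. f (x i)) * indicator (PiE I A) x = (\<Prod>i\<in>I. f (x i) * indicator (A i) (x i))"
        using I by (simp add: prod.distrib prod_indicator_ennreal)
    qed
    also have "\<dots> = (\<Prod>i\<in>I. \<integral>\<^sup>+y. f y * indicator (A i) y \<partial>N)"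
      using A' by (intro P.product_nn_integral_prod I) auto
    also have "\<dots> = (\<Prod>i\<in>I. emeasure (density N f) (A i))"
      using A' by (intro prod.cong refl) (simp add: emeasure_density)
    finally show "emeasure (density (PiM I (\<lambda>_. N)) (\<lambda>x. \<Prod>i\<in>I. f (x i))) (PiE I A) = (\<Prod>i\<in>I. emeasure (density N f) (A i))" .
  qed
  then show ?thesis by simp
qed

lemma exp_bound: assumes "0 \<le> (y::real)" shows "(1 - exp (-1)) * min y 1 \<le> 1 - exp (-y)"
proof (cases "y \<le> 1")
  case True
  have "exp (1 * ((1 - y) *\<^sub>R 0 + y *\<^sub>R (-1))) \<le> (1 - y) * exp (1 * 0) + y * exp (1 * (-1))"
  proof -
    have cv: "convex_on UNIV (\<lambda>x::real. exp (1*x))" by (rule convex_on_exp) simp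
    show ?thesis using convex_onD[OF cv, of y 0 "-1"] True assms by simp
  qed
  then show ?thesis using True by (simp add: algebra_simps)
next
  case False
  then show ?thesis by simp
qed

lemma ln_R: fixes \<alpha> M n :: real assumes a: "0 < \<alpha>" and M: "0 < M" and n: "0 < n"
  shows "(1+\<alpha>) * ln (((3 * M powr (1/\<alpha>)) / (2 powr (4 + \<alpha> + 3/\<alpha>) * n)) powr (\<alpha> / (1 + \<alpha>)))
    = \<alpha> * ln 3 + ln M - (4*\<alpha> + \<alpha>^2 + 3) * ln 2 - \<alpha> * ln n"
proof -
  have "ln ((3 * M powr (1/\<alpha>)) / (2 powr (4 + \<alpha> + 3/\<alpha>) * n)) = ln 3 + (1/\<alpha>) * ln M - ((4 + \<alpha> + 3/\<alpha>) * ln 2 + ln n)"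
    using M n by (simp add: ln_mult ln_div)
  moreover have e1: "(1+\<alpha>) * (\<alpha>/(1+\<alpha>) * L) = \<alpha> * L" for L
    using a by (simp add: field_simps)
  ultimately have "(1+\<alpha>) * ln (((3 * M powr (1/\<alpha>)) / (2 powr (4 + \<alpha> + 3/\<alpha>) * n)) powr (\<alpha> / (1 + \<alpha>)))
     = \<alpha> * (ln 3 + (1/\<alpha>) * ln M - ((4 + \<alpha> + 3/\<alpha>) * ln 2 + ln n))"
    by (simp only: ln_powr)
  also have "\<dots> = \<alpha> * ln 3 + \<alpha> * (1/\<alpha>) * ln M - (4*\<alpha> + \<alpha>*\<alpha> + \<alpha>*(3/\<alpha>)) * ln 2 - \<alpha> * ln n"
    by (simp add: algebra_simps)
  also have "\<dots> = \<alpha> * ln 3 + ln M - (4*\<alpha> + \<alpha>^2 + 3) * ln 2 - \<alpha> * ln n"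
    using a by (simp add: power2_eq_square)
  finally show ?thesis .
qed

lemma numeric_core:
  fixes \<alpha> M :: real and n :: nat
  assumes a0: "0 < \<alpha>" and a1: "\<alpha> \<le> 1" and M: "0 < M" and n: "1 \<le> n"
  shows "\<exists>m::nat. 1 \<le> m \<and> real n * (M * (1/(2*real m)) powr \<alpha>) / real m \<le> 1/2 \<and>
     min (((3 * M powr (1/\<alpha>)) / (2 powr (4 + \<alpha> + 3/\<alpha>) * real n)) powr (\<alpha> / (1 + \<alpha>))) (M / 8)
       \<le> M * (1/(2*real m)) powr \<alpha>"
proof (cases "2 * real n * M * (1/2) powr \<alpha> \<le> 1")
  case True
  have h: "1/2 \<le> (1/2::real) powr \<alpha>"
    using powr_mono'[of \<alpha> 1 "1/2::real"] a1 by simp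
  have "real n * (M * (1/(2*real 1)) powr \<alpha>) / real 1 \<le> 1/2" using True by simp
  moreover have "M / 8 \<le> M * (1/(2*real 1)) powr \<alpha>"
    using h M by simp
  ultimately show ?thesis by (intro exI[of _ 1]) auto
next
  case False
  define Q where "Q = 2 * real n * M * (1/2) powr \<alpha>"
  have Q1: "1 < Q" using False Q_def by simp
  define t where "t = Q powr (1/(1+\<alpha>))"
  have t1: "1 \<le> t" unfolding t_def using Q1 a0 by (intro ge_one_powr_ge_zero) auto
  have tQ: "t powr (1+\<alpha>) = Q" unfolding t_def using Q1 a0 by (simp add: powr_powr)
  define m where "m = nat \<lceil>t\<rceil>"
  have mt: "t \<le> real m" unfolding m_def by linarith
  have mt2: "real m \<le> 2 * t" unfolding m_def using t1 by linarith
  have m1: "1 \<le> m" using mt t1 by linarith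
  have mpos: "0 < real m" using m1 by simp
  have p1: "(1/(2*real m)) powr \<alpha> = (1/2) powr \<alpha> / real m powr \<alpha>"
    by (simp add: powr_divide[symmetric])
  have p2: "real m powr \<alpha> * real m = real m powr (1+\<alpha>)"
    using mpos by (simp add: powr_add)
  have p3: "real m * real m powr \<alpha> = real m powr (1+\<alpha>)" using p2 by (simp add: mult.commute)
  have "Q \<le> real m powr (1+\<alpha>)" using tQ mt t1 a0 by (metis powr_mono2 less_le_trans zero_less_one le_less add_pos_pos less_imp_le)
  then have c: "real n * (M * (1/(2*real m)) powr \<alpha>) / real m \<le> 1/2"
    using mpos Q1 unfolding p1 Q_def by (simp add: field_simps p3)
  have Hge: "M * (1/(4*t)) powr \<alpha> \<le> M * (1/(2*real m)) powr \<alpha>"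
    using mt2 mpos M a0 by (intro mult_left_mono powr_mono2) (auto simp: field_simps)
  define R where "R = ((3 * M powr (1/\<alpha>)) / (2 powr (4 + \<alpha> + 3/\<alpha>) * real n)) powr (\<alpha> / (1 + \<alpha>))"
  have Rpos: "0 < R" unfolding R_def using M n by simp
  have tpos: "0 < t" using t1 by simp
  have lnQ: "ln Q = ln 2 + ln (real n) + ln M - \<alpha> * ln 2"
    unfolding Q_def using M n by (simp add: ln_mult ln_div powr_divide)
  have lnt: "(1+\<alpha>) * ln t = ln Q" unfolding t_def using a0 by simp
  have "(1+\<alpha>) * ln (M * (1/(4*t)) powr \<alpha>) = (1+\<alpha>) * ln M - \<alpha> * ((1+\<alpha>) * ln 4 + (1+\<alpha>) * ln t)"
    using M tpos by (simp add: ln_mult ln_div powr_divide algebra_simps)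
  also have "\<dots> = ln M - (3*\<alpha> + \<alpha>^2) * ln 2 - \<alpha> * ln (real n)"
    unfolding lnt lnQ using ln_mult[of 2 2] by (simp add: algebra_simps power2_eq_square)
  finally have lnH: "(1+\<alpha>) * ln (M * (1/(4*t)) powr \<alpha>) = ln M - (3*\<alpha> + \<alpha>^2) * ln 2 - \<alpha> * ln (real n)" .
  have l3: "ln 3 \<le> 2 * ln (2::real)"
    using ln_mult[of 2 2] ln_le_cancel_iff[of 3 4] by simp
  have lR: "(1+\<alpha>) * ln R = \<alpha> * ln 3 + ln M - (4*\<alpha> + \<alpha>^2 + 3) * ln 2 - \<alpha> * ln (real n)"
    unfolding R_def by (rule ln_R[OF a0 M]) (use n in simp)
  have f1: "\<alpha> * ln 3 \<le> \<alpha> * (2 * ln 2)" using mult_left_mono[OF l3, of \<alpha>] a0 by simp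
  have f2: "0 \<le> ln (2::real)" by simp
  have "(1+\<alpha>) * ln R \<le> (1+\<alpha>) * ln (M * (1/(4*t)) powr \<alpha>)"
  proof -
    have "\<alpha> * ln 2 \<le> 1 * ln 2" using mult_right_mono[OF a1 f2] .
    then have g: "\<alpha> * ln 3 \<le> \<alpha> * ln 2 + 3 * ln 2" using f1 f2 by linarith
    show ?thesis unfolding lnH lR using g by (simp add: algebra_simps power2_eq_square)
  qed
  then have "ln R \<le> ln (M * (1/(4*t)) powr \<alpha>)" using a0 by simp
  then have "R \<le> M * (1/(4*t)) powr \<alpha>" using Rpos M tpos by simp
  then show ?thesis using m1 c Hge unfolding R_def by (intro exI[of _ m]) auto
qed

definition cell :: "nat \<Rightarrow> nat \<Rightarrow> real set" where
  "cell m j = {real j / real m ..< (real j + 1) / real m}"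
definition mid :: "nat \<Rightarrow> nat \<Rightarrow> real set" where
  "mid m j = {(real j + 1/4) / real m .. (real j + 3/4) / real m}"
definition bump :: "real \<Rightarrow> nat \<Rightarrow> nat \<Rightarrow> real \<Rightarrow> real" where
  "bump H m j w = max 0 (H - 2 * H * real m * \<bar>w - (real j + 1/2) / real m\<bar>)"
definition gam :: "real \<Rightarrow> real \<Rightarrow> nat \<Rightarrow> nat set \<Rightarrow> real \<Rightarrow> real" where
  "gam c H m \<sigma> w = c + (\<Sum>j\<in>\<sigma>. bump H m j w)"

lemma mabs: "0 < (m::real) \<Longrightarrow> m * \<bar>w - x / m\<bar> = \<bar>m * w - x\<bar>"
proof -
  assume m: "0 < m"
  have "m * \<bar>w - x / m\<bar> = \<bar>m * (w - x / m)\<bar>" using m by (simp add: abs_mult)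
  also have "m * (w - x / m) = m * w - x" using m by (simp add: field_simps)
  finally show ?thesis .
qed

lemma max0_lip: "\<bar>max 0 a - max 0 (b::real)\<bar> \<le> \<bar>a - b\<bar>"
  by (auto simp: max_def abs_if)

lemma bump_nonneg: "0 \<le> bump H m j w" by (simp add: bump_def)

lemma bump_le: "0 \<le> H \<Longrightarrow> bump H m j w \<le> H"
  by (simp add: bump_def)

lemma bump_pos_cell: assumes "0 < bump H m j w" "1 \<le> m" "0 \<le> H" shows "w \<in> cell m j"
proof -
  have m: "0 < real m" using assms by simp
  from assms(1) have X: "0 < H - 2 * H * real m * \<bar>w - (real j + 1/2) / real m\<bar>"
    by (simp add: bump_def)
  have "0 \<le> 2 * H * real m * \<bar>w - (real j + 1/2) / real m\<bar>" using assms(3) m by simp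
  then have H: "0 < H" using X by linarith
  have "H * (2 * (real m * \<bar>w - (real j + 1/2) / real m\<bar>)) < H * 1" using X by (simp add: algebra_simps)
  then have "2 * (real m * \<bar>w - (real j + 1/2) / real m\<bar>) < 1" using H by (simp only: mult_less_cancel_left_pos)
  then have "real m * \<bar>w - (real j + 1/2) / real m\<bar> < 1/2" by simp
  then have "\<bar>real m * w - (real j + 1/2)\<bar> < 1/2" using mabs[OF m] by simp
  then have "real j < real m * w \<and> real m * w < real j + 1" unfolding abs_less_iff by linarith
  then show ?thesis using m by (auto simp: cell_def field_simps)
qed

lemma bump_zero: "w \<notin> cell m j \<Longrightarrow> 1 \<le> m \<Longrightarrow> 0 \<le> H \<Longrightarrow> bump H m j w = 0"
  using bump_pos_cell[of H m j w] bump_nonneg[of H m j w] by linarith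

lemma bump_mid: assumes "w \<in> mid m j" "1 \<le> m" "0 \<le> H" shows "H / 2 \<le> bump H m j w"
proof -
  have m: "0 < real m" using assms by simp
  from assms(1) m have "(real j + 1/4) \<le> real m * w" "real m * w \<le> real j + 3/4"
    by (auto simp: mid_def field_simps)
  then have "\<bar>real m * w - (real j + 1/2)\<bar> \<le> 1/4" by (simp only: abs_le_iff) linarith
  then have "real m * \<bar>w - (real j + 1/2) / real m\<bar> \<le> 1/4" using mabs[OF m] by simp
  then have "2 * H * (real m * \<bar>w - (real j + 1/2) / real m\<bar>) \<le> 2 * H * (1/4)"
    using assms(3) by (intro mult_left_mono) auto
  moreover have "2 * H * real m * \<bar>w - (real j + 1/2) / real m\<bar> = 2 * H * (real m * \<bar>w - (real j + 1/2) / real m\<bar>)"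
    by (simp add: mult.assoc)
  ultimately have "H / 2 \<le> H - 2 * H * real m * \<bar>w - (real j + 1/2) / real m\<bar>" by linarith
  then show ?thesis unfolding bump_def by (rule order.trans[OF _ max.cobounded2])
qed

lemma cell_iff: "1 \<le> m \<Longrightarrow> w \<in> cell m j \<longleftrightarrow> real j \<le> real m * w \<and> real m * w < real j + 1"
  by (auto simp: cell_def field_simps)

lemma cells_disj: assumes "1 \<le> m" "w \<in> cell m i" "w \<in> cell m j" shows "i = j"
proof -
  have "real i < real j + 1" "real j < real i + 1" using assms by (auto simp: cell_iff)
  then show ?thesis by linarith
qed

lemma cell_sub: assumes "1 \<le> m" "j < m" shows "cell m j \<subseteq> {0..1}"
proof
  fix w assume "w \<in> cell m j"
  then have "real j \<le> real m * w" "real m * w < real j + 1" using assms by (auto simp: cell_iff)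
  moreover have "real j + 1 \<le> real m" using assms by simp
  ultimately have "0 \<le> real m * w" "real m * w \<le> real m * 1" by linarith+
  moreover have "0 < real m" using assms by simp
  ultimately show "w \<in> {0..1}"
    by (auto simp: zero_le_mult_iff mult_le_cancel_left_pos)
qed

lemma mid_sub: assumes "1 \<le> m" shows "mid m j \<subseteq> cell m j"
  using assms by (auto simp: mid_def cell_def field_simps)

lemma emeasure_mid: assumes "1 \<le> m" shows "emeasure lborel (mid m j) = ennreal (1 / (2 * real m))"
  using assms unfolding mid_def by (simp add: field_simps diff_divide_distrib[symmetric])

lemma emeasure_cell: assumes "1 \<le> m" shows "emeasure lborel (cell m j) = ennreal (1 / real m)"
  using assms unfolding cell_def by (simp add: field_simps diff_divide_distrib[symmetric])

lemma bump_holder: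
  assumes a0: "0 < \<alpha>" and a1: "\<alpha> \<le> 1" and M: "0 < M" and m: "1 \<le> m"
    and H: "H = M * (1/(2*real m)) powr \<alpha>"
  shows "\<bar>bump H m j w - bump H m j v\<bar> \<le> M * \<bar>w - v\<bar> powr \<alpha>"
proof -
  define d where "d = \<bar>w - v\<bar>"
  define s where "s = 1/(2*real m)"
  have s: "0 < s" using m by (simp add: s_def)
  have H0: "0 \<le> H" using H M by simp
  have 1: "\<bar>bump H m j w - bump H m j v\<bar> \<le> H"
    using bump_le[OF H0, of m j w] bump_le[OF H0, of m j v] bump_nonneg[of H m j w] bump_nonneg[of H m j v] by linarith
  have "\<bar>(H - 2 * H * real m * \<bar>w - (real j + 1/2) / real m\<bar>) - (H - 2 * H * real m * \<bar>v - (real j + 1/2) / real m\<bar>)\<bar>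
     \<le> 2 * H * real m * d"
  proof -
    have "\<bar>\<bar>w - (real j + 1/2) / real m\<bar> - \<bar>v - (real j + 1/2) / real m\<bar>\<bar> \<le> d"
      unfolding d_def by linarith
    then have "2 * H * real m * \<bar>\<bar>w - (real j + 1/2) / real m\<bar> - \<bar>v - (real j + 1/2) / real m\<bar>\<bar> \<le> 2 * H * real m * d"
      using H0 by (intro mult_left_mono) auto
    moreover have "(H - 2 * H * real m * \<bar>w - (real j + 1/2) / real m\<bar>) - (H - 2 * H * real m * \<bar>v - (real j + 1/2) / real m\<bar>)
       = 2 * H * real m * (\<bar>v - (real j + 1/2) / real m\<bar> - \<bar>w - (real j + 1/2) / real m\<bar>)"
      by (simp add: algebra_simps)
    moreover have "\<bar>2 * H * real m * (\<bar>v - (real j + 1/2) / real m\<bar> - \<bar>w - (real j + 1/2) / real m\<bar>)\<bar>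
       = 2 * H * real m * \<bar>\<bar>w - (real j + 1/2) / real m\<bar> - \<bar>v - (real j + 1/2) / real m\<bar>\<bar>"
      using H0 by (simp add: abs_mult abs_minus_commute)
    ultimately show ?thesis by simp
  qed
  then have 2: "\<bar>bump H m j w - bump H m j v\<bar> \<le> 2 * H * real m * d"
    unfolding bump_def by (rule order.trans[OF max0_lip])
  show ?thesis
  proof (cases "s \<le> d")
    case True
    have "H \<le> M * d powr \<alpha>" unfolding H s_def[symmetric] using True s M a0
      by (intro mult_left_mono powr_mono2) auto
    then show ?thesis using 1 d_def by simp
  next
    case False
    define x where "x = d / s"
    have x0: "0 \<le> x" "x \<le> 1" using False s by (auto simp: x_def d_def)
    have "x powr 1 \<le> x powr \<alpha>" using x0 a1 by (intro powr_mono') auto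
    then have xx: "x \<le> x powr \<alpha>" using x0 by simp
    have dx: "d = s * x" using s by (simp add: x_def)
    have "2 * H * real m * d = M * s powr \<alpha> * x" using m by (simp add: H s_def dx field_simps)
    also have "\<dots> \<le> M * s powr \<alpha> * x powr \<alpha>" using xx M by (intro mult_left_mono) auto
    also have "\<dots> = M * d powr \<alpha>" using s x0 by (simp add: dx powr_mult)
    finally show ?thesis using 2 d_def by simp
  qed
qed

lemma gam_holder:
  assumes a0: "0 < \<alpha>" and a1: "\<alpha> \<le> 1" and M: "0 < M" and m: "1 \<le> m"
    and H: "H = M * (1/(2*real m)) powr \<alpha>" and c: "0 < c" and fin: "finite \<sigma>"
  shows "gam c H m \<sigma> \<in> holder_class \<alpha> M"
proof -
  have H0: "0 \<le> H" using H M by simp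
  have one: "gam c H m \<sigma> w - gam c H m \<sigma> v \<le> M * \<bar>w - v\<bar> powr \<alpha>" for w v
  proof (cases "\<exists>j\<in>\<sigma>. 0 < bump H m j w")
    case True
    then obtain j where j: "j \<in> \<sigma>" "0 < bump H m j w" by auto
    have "(\<Sum>i\<in>\<sigma>. bump H m i w) = bump H m j w + (\<Sum>i\<in>\<sigma>-{j}. bump H m i w)"
      using fin j by (simp add: sum.remove)
    also have "(\<Sum>i\<in>\<sigma>-{j}. bump H m i w) = 0"
    proof (rule sum.neutral, rule ballI)
      fix i assume i: "i \<in> \<sigma> - {j}"
      show "bump H m i w = 0"
      proof (rule ccontr)
        assume "bump H m i w \<noteq> 0"
        then have "0 < bump H m i w" using bump_nonneg[of H m i w] by simp
        then have "w \<in> cell m i" using bump_pos_cell m H0 by blast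
        moreover have "w \<in> cell m j" using j bump_pos_cell m H0 by blast
        ultimately show False using cells_disj[OF m] i by blast
      qed
    qed
    finally have sw: "(\<Sum>i\<in>\<sigma>. bump H m i w) = bump H m j w" by simp
    have sv: "bump H m j v \<le> (\<Sum>i\<in>\<sigma>. bump H m i v)"
      using fin j bump_nonneg by (intro member_le_sum) auto
    show ?thesis using sw sv bump_holder[OF a0 a1 M m H, of j w v] by (simp add: gam_def)
  next
    case False
    then have "(\<Sum>i\<in>\<sigma>. bump H m i w) = 0" using bump_nonneg
      by (intro sum.neutral) (metis less_eq_real_def)
    moreover have "0 \<le> (\<Sum>i\<in>\<sigma>. bump H m i v)" by (intro sum_nonneg bump_nonneg)
    moreover have "0 \<le> M * \<bar>w - v\<bar> powr \<alpha>" using M by simp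
    ultimately show ?thesis by (simp add: gam_def)
  qed
  have pos: "0 < gam c H m \<sigma> w" for w
    using c by (simp add: gam_def add_pos_nonneg sum_nonneg bump_nonneg)
  have "\<bar>gam c H m \<sigma> w - gam c H m \<sigma> v\<bar> \<le> M * \<bar>w - v\<bar> powr \<alpha>" for w v
    using one[of w v] one[of v w] by (simp add: abs_le_iff abs_minus_commute)
  then show ?thesis unfolding holder_class_def using pos by blast
qed

definition NN :: "(real \<times> nat) measure" where
  "NN = lborel \<Otimes>\<^sub>M count_space UNIV"

definition dens :: "(real \<Rightarrow> real) \<Rightarrow> real \<times> nat \<Rightarrow> ennreal" where
  "dens \<gamma> = (\<lambda>(w,k). ennreal (indicator {0..1} w * pp (\<gamma> w) k))"

lemma sf_count: "sigma_finite_measure (count_space (UNIV::nat set))"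
  by (rule sigma_finite_measure_count_space_countable) simp

lemma sf_NN: "sigma_finite_measure NN"
proof -
  interpret C: sigma_finite_measure "count_space (UNIV::nat set)" by (rule sf_count)
  interpret P: pair_sigma_finite lborel "count_space (UNIV::nat set)" ..
  show ?thesis unfolding NN_def by (rule P.sigma_finite_measure_axioms)
qed

lemma sets_NN: "sets NN = sets (borel \<Otimes>\<^sub>M count_space UNIV)"
  unfolding NN_def by (intro sets_pair_measure_cong) auto

lemma space_NN: "space NN = UNIV"
  unfolding NN_def by (simp add: space_pair_measure)

lemma obs_law_eq: assumes "\<forall>w\<in>{0..1}. 0 < \<gamma> w" shows "obs_law \<gamma> = density NN (dens \<gamma>)"
proof -
  have "(\<lambda>(w, k). indicator {0..1} w * ennreal (pmf (poisson_pmf (\<gamma> w)) k)) = dens \<gamma>"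
  proof (intro ext, clarify)
    fix w k
    show "indicator {0..1} w * ennreal (pmf (poisson_pmf (\<gamma> w)) k) = dens \<gamma> (w, k)"
      using assms by (cases "w \<in> {0..1}") (auto simp: dens_def pp_def)
  qed
  then show ?thesis unfolding obs_law_def NN_def by simp
qed

lemma meas_dens[measurable]: "\<gamma> \<in> borel_measurable borel \<Longrightarrow> dens \<gamma> \<in> borel_measurable NN"
  unfolding dens_def NN_def by (rule meas_pp) auto

lemma int_NN:
  assumes [measurable]: "u \<in> borel_measurable borel" "r \<in> borel_measurable borel"
    and nn: "\<And>w. 0 \<le> u w" "\<And>w. u w \<noteq> 0 \<Longrightarrow> 0 \<le> r w"
  shows "(\<integral>\<^sup>+x. (\<lambda>(w,k). ennreal (u w * pp (r w) k)) x \<partial>NN) = (\<integral>\<^sup>+w. ennreal (u w) \<partial>lborel)"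
proof -
  interpret C: sigma_finite_measure "count_space (UNIV::nat set)" by (rule sf_count)
  have "(\<integral>\<^sup>+x. (\<lambda>(w,k). ennreal (u w * pp (r w) k)) x \<partial>NN)
      = (\<integral>\<^sup>+w. (\<integral>\<^sup>+k. ennreal (u w * pp (r w) k) \<partial>count_space UNIV) \<partial>lborel)"
    unfolding NN_def by (subst C.nn_integral_fst[symmetric]) (auto intro: meas_pp)
  also have "\<dots> = (\<integral>\<^sup>+w. ennreal (u w) \<partial>lborel)"
  proof (rule nn_integral_cong)
    fix w
    have nn': "0 \<le> u w * pp (r w) k" for k
      using nn[of w] by (cases "u w = 0") (auto intro!: mult_nonneg_nonneg pp_nonneg)
    have s: "(\<lambda>k. u w * pp (r w) k) sums (u w * 1)" by (intro sums_mult pp_sums)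
    have "(\<integral>\<^sup>+k. ennreal (u w * pp (r w) k) \<partial>count_space UNIV) = (\<Sum>k. ennreal (u w * pp (r w) k))"
      by (rule nn_integral_count_space_nat)
    also have "\<dots> = ennreal (\<Sum>k. u w * pp (r w) k)"
      using nn' s by (intro suminf_ennreal2) (auto simp: sums_iff)
    also have "\<dots> = ennreal (u w)" using sums_unique[OF s] by simp
    finally show "(\<integral>\<^sup>+k. ennreal (u w * pp (r w) k) \<partial>count_space UNIV) = ennreal (u w)" .
  qed
  finally show ?thesis .
qed

lemma prob_dens: assumes [measurable]: "\<gamma> \<in> borel_measurable borel" and pos: "\<forall>w\<in>{0..1}. 0 < \<gamma> w"
  shows "prob_space (density NN (dens \<gamma>))"
proof (rule prob_spaceI)
  have "emeasure (density NN (dens \<gamma>)) (space NN) = (\<integral>\<^sup>+x. dens \<gamma> x * indicator (space NN) x \<partial>NN)"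
    by (rule emeasure_density) auto
  also have "\<dots> = (\<integral>\<^sup>+x. dens \<gamma> x \<partial>NN)"
    by (rule nn_integral_cong) simp
  finally have "emeasure (density NN (dens \<gamma>)) (space (density NN (dens \<gamma>))) = (\<integral>\<^sup>+x. dens \<gamma> x \<partial>NN)"
    by simp
  also have "\<dots> = (\<integral>\<^sup>+w. ennreal (indicator {0..1} (w::real)) \<partial>lborel)"
    unfolding dens_def using pos by (intro int_NN) (auto simp: indicator_def less_imp_le)
  also have "\<dots> = 1" by (simp add: ennreal_indicator)
  finally show "emeasure (density NN (dens \<gamma>)) (space (density NN (dens \<gamma>))) = 1" .
qed

definition Phi :: "nat \<Rightarrow> (nat \<Rightarrow> real \<times> nat) measure" where
  "Phi n = PiM {..<n} (\<lambda>_. NN)"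

lemma sets_Phi: "sets (Phi n) = sets (data_space n)"
  unfolding Phi_def data_space_def by (intro sets_PiM_cong refl sets_NN)

lemma space_Phi: "space (Phi n) = space (data_space n)"
  using sets_Phi sets_eq_imp_space_eq by blast

lemma PiM_obs: assumes [measurable]: "\<gamma> \<in> borel_measurable borel" and pos: "\<forall>w\<in>{0..1}. 0 < \<gamma> w"
  shows "PiM {..<n} (\<lambda>_. obs_law \<gamma>) = density (Phi n) (\<lambda>x. \<Prod>i<n. dens \<gamma> (x i))"
proof -
  interpret P: prob_space "density NN (dens \<gamma>)" by (rule prob_dens[OF assms])
  show ?thesis unfolding obs_law_eq[OF pos] Phi_def
    by (rule PiM_density[OF sf_NN]) (auto intro: P.sigma_finite_measure_axioms)
qed

definition Lj :: "nat \<Rightarrow> nat \<Rightarrow> (real \<Rightarrow> real) \<Rightarrow> (real \<Rightarrow> real) \<Rightarrow> ennreal" where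
  "Lj m j \<gamma> e = (\<integral>\<^sup>+ w. ennreal (hc (\<gamma> w) (e w)) * indicator (cell m j) w \<partial>lborel)"

lemma meas_cell[measurable]: "cell m j \<in> sets borel"
  by (simp add: cell_def)

lemma meas_mid[measurable]: "mid m j \<in> sets borel"
  by (simp add: mid_def)

lemma sum_ind_cells: assumes m: "1 \<le> m"
  shows "(\<Sum>j<m. indicator (cell m j) w :: ennreal) \<le> indicator {0..1} w"
proof (cases "\<exists>j<m. w \<in> cell m j")
  case True
  then obtain j where j: "j < m" "w \<in> cell m j" by auto
  have "(\<Sum>i<m. indicator (cell m i) w :: ennreal) = indicator (cell m j) w + (\<Sum>i\<in>{..<m}-{j}. indicator (cell m i) w)"
    using j by (simp add: sum.remove)
  also have "(\<Sum>i\<in>{..<m}-{j}. indicator (cell m i) w :: ennreal) = 0"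
    using cells_disj[OF m _ j(2)] by (intro sum.neutral) (auto simp: indicator_def)
  finally show ?thesis using j cell_sub[OF m j(1)] by (auto simp: indicator_def)
next
  case False
  then have "(\<Sum>i<m. indicator (cell m i) w :: ennreal) = 0"
    by (intro sum.neutral) (auto simp: indicator_def)
  then show ?thesis by simp
qed

lemma loss_decomp:
  assumes [measurable]: "\<gamma> \<in> borel_measurable borel" "e \<in> borel_measurable borel"
    and pos: "\<forall>w\<in>{0..1}. 0 < \<gamma> w \<and> 0 < e w" and m: "1 \<le> m"
  shows "(\<Sum>j<m. Lj m j \<gamma> e) \<le> poisson_loss \<gamma> e"
proof -
  have "poisson_loss \<gamma> e = (\<integral>\<^sup>+ w. ennreal (hc (\<gamma> w) (e w)) \<partial>PW)"
    unfolding poisson_loss_def PW_def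
  proof (rule nn_integral_cong_AE, rule AE_uniform_measureI)
    show "AE w in lborel. w \<in> {0..1} \<longrightarrow>
        ennreal (hellinger_sq (poisson_pmf (\<gamma> w)) (poisson_pmf (e w))) = ennreal (hc (\<gamma> w) (e w))"
      using pos by (intro AE_I2) (simp add: hellinger_poisson)
  qed simp
  also have "\<dots> = (\<integral>\<^sup>+ w. ennreal (hc (\<gamma> w) (e w)) * indicator {0..1} w \<partial>lborel) / emeasure lborel {0..1::real}"
    unfolding PW_def by (rule nn_integral_uniform_measure) (auto simp: hc_def)
  also have "\<dots> = (\<integral>\<^sup>+ w. ennreal (hc (\<gamma> w) (e w)) * indicator {0..1} w \<partial>lborel)" by (simp add: divide_ennreal_def)
  finally have pl: "poisson_loss \<gamma> e = (\<integral>\<^sup>+ w. ennreal (hc (\<gamma> w) (e w)) * indicator {0..1} w \<partial>lborel)" .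
  have "(\<Sum>j<m. Lj m j \<gamma> e) = (\<integral>\<^sup>+ w. (\<Sum>j<m. ennreal (hc (\<gamma> w) (e w)) * indicator (cell m j) w) \<partial>lborel)"
    unfolding Lj_def by (rule nn_integral_sum[symmetric]) (auto simp: hc_def)
  also have "\<dots> \<le> (\<integral>\<^sup>+ w. ennreal (hc (\<gamma> w) (e w)) * indicator {0..1} w \<partial>lborel)"
  proof (rule nn_integral_mono)
    fix w
    have "(\<Sum>j<m. ennreal (hc (\<gamma> w) (e w)) * indicator (cell m j) w) = ennreal (hc (\<gamma> w) (e w)) * (\<Sum>j<m. indicator (cell m j) w)"
      by (simp add: sum_distrib_left)
    also have "\<dots> \<le> ennreal (hc (\<gamma> w) (e w)) * indicator {0..1} w"
      by (intro mult_left_mono sum_ind_cells m) auto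
    finally show "(\<Sum>j<m. ennreal (hc (\<gamma> w) (e w)) * indicator (cell m j) w) \<le> ennreal (hc (\<gamma> w) (e w)) * indicator {0..1} w" .
  qed
  finally show ?thesis using pl by simp
qed

lemma est_meas_Phi:
  assumes "(\<lambda>(x, w). est x w) \<in> borel_measurable (data_space n \<Otimes>\<^sub>M borel)"
  shows "(\<lambda>p. est (fst p) (snd p)) \<in> borel_measurable (Phi n \<Otimes>\<^sub>M lborel)"
proof -
  have S: "sets (Phi n \<Otimes>\<^sub>M lborel) = sets (data_space n \<Otimes>\<^sub>M borel)"
    by (intro sets_pair_measure_cong sets_Phi) simp
  have eq: "(\<lambda>p. est (fst p) (snd p)) = (\<lambda>(x, w). est x w)" by auto
  show ?thesis unfolding eq measurable_cong_sets[OF S refl] by (rule assms)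
qed

lemma est_meas_x:
  assumes "(\<lambda>(x, w). est x w) \<in> borel_measurable (data_space n \<Otimes>\<^sub>M borel)" "x \<in> space (data_space n)"
  shows "est x \<in> borel_measurable borel"
  using measurable_compose_Pair1[OF assms(2) assms(1)] by simp

lemma Lj_meas:
  assumes E: "(\<lambda>(x, w). est x w) \<in> borel_measurable (data_space n \<Otimes>\<^sub>M borel)"
    and [measurable]: "\<gamma> \<in> borel_measurable borel"
  shows "(\<lambda>x. Lj m j \<gamma> (est x)) \<in> borel_measurable (Phi n)"
proof -
  note [measurable] = est_meas_Phi[OF E]
  have "(\<lambda>p. ennreal (hc (\<gamma> (snd p)) (est (fst p) (snd p))) * indicator (cell m j) (snd p)) \<in> borel_measurable (Phi n \<Otimes>\<^sub>M lborel)"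
    unfolding hc_def by measurable
  then have "case_prod (\<lambda>x w. ennreal (hc (\<gamma> w) (est x w)) * indicator (cell m j) w) \<in> borel_measurable (Phi n \<Otimes>\<^sub>M lborel)"
    by (simp add: case_prod_beta')
  then show ?thesis unfolding Lj_def by (rule lborel.borel_measurable_nn_integral)
qed

lemma pp_min: assumes "0 \<le> a" "a \<le> b" shows "exp (-(b - a)) * pp a k \<le> pp b k"
proof -
  have "a ^ k \<le> b ^ k" using assms by (intro power_mono) auto
  then have "a ^ k / fact k * exp (-b) \<le> b ^ k / fact k * exp (-b)"
    by (intro mult_right_mono divide_right_mono) auto
  moreover have eq: "exp (-(b - a)) * pp a k = a ^ k / fact k * exp (-b)"
  proof -
    have "exp (-(b - a)) * pp a k = a ^ k / fact k * (exp (-(b - a)) * exp (-a))"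
      by (simp add: pp_def ac_simps)
    also have "exp (-(b - a)) * exp (-a) = exp (-b)" by (simp add: exp_add[symmetric])
    finally show ?thesis .
  qed
  ultimately have "exp (-(b - a)) * pp a k \<le> b ^ k / fact k * exp (-b)" by (simp only: eq)
  then show ?thesis by (simp only: pp_def)
qed

lemma hc_nonneg: "0 \<le> hc a b"
  by (simp add: hc_def)

lemma gam_insert: assumes "j \<notin> \<sigma>" "finite \<sigma>"
  shows "gam c H m (insert j \<sigma>) w = gam c H m \<sigma> w + bump H m j w"
  using assms by (simp add: gam_def)

lemma gam_cell: assumes "j \<notin> \<sigma>" "w \<in> cell m j" "0 \<le> H" "1 \<le> m"
  shows "gam c H m \<sigma> w = c"
proof -
  have "bump H m i w = 0" if "i \<in> \<sigma>" for i
  proof -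
    have "w \<notin> cell m i" using cells_disj[OF assms(4) _ assms(2)] that assms(1) by blast
    then show "bump H m i w = 0" using bump_zero assms(3,4) by blast
  qed
  then show ?thesis by (simp add: gam_def)
qed

lemma bump_ind: assumes "0 \<le> H" "1 \<le> m" shows "bump H m j w \<le> H * indicator (cell m j) w"
  using bump_le[OF assms(1)] bump_zero[OF _ assms(2,1)] by (cases "w \<in> cell m j") auto

lemma hc_mid: assumes H: "0 < H" and b: "H / 2 \<le> b"
  shows "1 - exp (-(H/8)) \<le> hc (H/16) (H/16 + b)"
proof -
  have s1: "sqrt (H/16) = sqrt H / 4" by (simp add: real_sqrt_divide)
  have "sqrt (9 * H / 16) \<le> sqrt (H/16 + b)" using b by (intro real_sqrt_le_mono) auto
  moreover have "sqrt (9 * H / 16) = 3 / 4 * sqrt H" by (simp add: real_sqrt_divide real_sqrt_mult)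
  ultimately have "sqrt H / 2 \<le> sqrt (H/16 + b) - sqrt (H/16)" unfolding s1 by simp
  moreover have "0 \<le> sqrt H / 2" using H by simp
  ultimately have "(sqrt H / 2)^2 \<le> (sqrt (H/16 + b) - sqrt (H/16))^2" by (intro power_mono)
  moreover have "(sqrt H / 2)^2 = H / 4" using H by (simp add: power_divide)
  ultimately have "H / 4 \<le> (sqrt (H/16) - sqrt (H/16 + b))^2" by (simp add: power2_commute)
  then have "exp (-((sqrt (H/16) - sqrt (H/16 + b))^2) / 2) \<le> exp (-(H/8))" by simp
  then show ?thesis by (simp add: hc_def)
qed

lemma L_pair:
  assumes [measurable]: "e \<in> borel_measurable borel" and epos: "\<forall>w\<in>{0..1}. 0 < e w"
    and m: "1 \<le> m" "j < m" and j: "j \<notin> \<sigma>" "finite \<sigma>" and H: "0 < H"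
  shows "ennreal ((1 - exp (-(H/8))) / 2) * ennreal (1 / (2 * real m))
     \<le> Lj m j (gam (H/16) H m \<sigma>) e + Lj m j (gam (H/16) H m (insert j \<sigma>)) e"
proof -
  let ?g = "gam (H/16) H m \<sigma>" and ?g' = "gam (H/16) H m (insert j \<sigma>)"
  have [measurable]: "?g \<in> borel_measurable borel" "?g' \<in> borel_measurable borel"
    unfolding gam_def bump_def by measurable
  have "ennreal ((1 - exp (-(H/8))) / 2) * ennreal (1 / (2 * real m))
      = (\<integral>\<^sup>+ w. ennreal ((1 - exp (-(H/8))) / 2) * indicator (mid m j) w \<partial>lborel)"
    using m by (simp add: nn_integral_cmult_indicator emeasure_mid)
  also have "\<dots> \<le> (\<integral>\<^sup>+ w. ennreal (hc (?g w) (e w)) * indicator (cell m j) w + ennreal (hc (?g' w) (e w)) * indicator (cell m j) w \<partial>lborel)"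
  proof (rule nn_integral_mono)
    fix w
    show "ennreal ((1 - exp (-(H/8))) / 2) * indicator (mid m j) w
      \<le> ennreal (hc (?g w) (e w)) * indicator (cell m j) w + ennreal (hc (?g' w) (e w)) * indicator (cell m j) w"
    proof (cases "w \<in> mid m j")
      case True
      then have wc: "w \<in> cell m j" using mid_sub[OF m(1)] by auto
      have w01: "w \<in> {0..1}" using cell_sub[OF m] wc by auto
      have g: "?g w = H/16" using gam_cell[OF j(1) wc _ m(1)] H by simp
      have g': "?g' w = H/16 + bump H m j w" using gam_insert[OF j] g by simp
      have bm: "H/2 \<le> bump H m j w" using bump_mid[OF True m(1)] H by simp
      have "1 - exp (-(H/8)) \<le> hc (H/16) (H/16 + bump H m j w)" by (rule hc_mid[OF H bm])
      also have "\<dots> \<le> 2 * (hc (H/16) (e w) + hc (H/16 + bump H m j w) (e w))"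
      proof -
        have "0 < e w" using epos w01 by blast
        then show ?thesis using H bump_nonneg[of H m j w] by (intro hc_quasi_tri) auto
      qed
      finally have "(1 - exp (-(H/8))) / 2 \<le> hc (?g w) (e w) + hc (?g' w) (e w)"
        unfolding g g' by simp
      then have "ennreal ((1 - exp (-(H/8))) / 2) \<le> ennreal (hc (?g w) (e w)) + ennreal (hc (?g' w) (e w))"
        by (simp add: ennreal_plus[symmetric] hc_nonneg del: ennreal_plus)
      then show ?thesis using True wc by simp
    next
      case False
      then show ?thesis by simp
    qed
  qed
  also have "\<dots> = Lj m j ?g e + Lj m j ?g' e"
    unfolding Lj_def by (rule nn_integral_add) (auto simp: hc_def)
  finally show ?thesis .
qed

lemma gam_meas[measurable]: "gam c H m \<sigma> \<in> borel_measurable borel"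
  unfolding gam_def bump_def by measurable

lemma gam_pos: "0 < c \<Longrightarrow> 0 < gam c H m \<sigma> w"
  by (simp add: gam_def add_pos_nonneg sum_nonneg bump_nonneg)

definition u0 :: "real \<Rightarrow> nat \<Rightarrow> nat \<Rightarrow> real \<Rightarrow> real" where
  "u0 H m j w = indicator {0..1} w * exp (-(H * indicator (cell m j) w))"

lemma g0_int:
  assumes m: "1 \<le> m" "j < m" and H: "0 < H" and [measurable]: "\<gamma> \<in> borel_measurable borel"
    and pos: "\<forall>w\<in>{0..1}. 0 < \<gamma> w"
  shows "ennreal (1 - H / real m) \<le> (\<integral>\<^sup>+ x. (\<lambda>(w,k). ennreal (u0 H m j w * pp (\<gamma> w) k)) x \<partial>NN)"
proof -
  have [measurable]: "u0 H m j \<in> borel_measurable borel" unfolding u0_def by measurable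
  have I: "(\<integral>\<^sup>+ x. (\<lambda>(w,k). ennreal (u0 H m j w * pp (\<gamma> w) k)) x \<partial>NN) = (\<integral>\<^sup>+ w. ennreal (u0 H m j w) \<partial>lborel)"
  proof (rule int_NN)
    show "0 \<le> u0 H m j w" for w by (simp add: u0_def)
    show "u0 H m j w \<noteq> 0 \<Longrightarrow> 0 \<le> \<gamma> w" for w using pos by (auto simp: u0_def indicator_def less_imp_le)
  qed auto
  define \<beta> where "\<beta> = (1 - exp (-H)) / real m"
  have e1: "1 - exp (-H) \<le> H" using exp_ge_add_one_self[of "-H"] by simp
  have e2: "0 \<le> 1 - exp (-H)" "1 - exp (-H) \<le> 1" using H by auto
  have mpos: "0 < real m" using m by simp
  have "1 \<le> real m" using m by simp
  then have m1: "1 - exp (-H) \<le> 1 * real m" using e2 by linarith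
  have b0: "0 \<le> \<beta>" "\<beta> \<le> 1" using e2 mpos m1 unfolding \<beta>_def by (auto simp: pos_divide_le_eq)
  have bH: "\<beta> \<le> H / real m" unfolding \<beta>_def using e1 mpos by (simp add: divide_right_mono)
  have pw: "ennreal (u0 H m j w) + ennreal (1 - exp (-H)) * indicator (cell m j) w = indicator {0..1} w" for w
  proof (cases "w \<in> cell m j")
    case True
    then have "w \<in> {0..1}" using cell_sub[OF m] by auto
    then show ?thesis using True e2 by (simp add: u0_def ennreal_plus[symmetric] del: ennreal_plus)
  next
    case False
    then show ?thesis by (simp add: u0_def indicator_def)
  qed
  have "(\<integral>\<^sup>+ w. ennreal (u0 H m j w) \<partial>lborel) + ennreal (1 - exp (-H)) * emeasure lborel (cell m j)
      = (\<integral>\<^sup>+ w. ennreal (u0 H m j w) + ennreal (1 - exp (-H)) * indicator (cell m j) w \<partial>lborel)"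
    by (subst nn_integral_add) (auto simp: nn_integral_cmult_indicator)
  also have "\<dots> = (\<integral>\<^sup>+ w. indicator {0..1} (w::real) \<partial>lborel)" by (simp only: pw)
  also have "\<dots> = 1" by simp
  finally have "(\<integral>\<^sup>+ w. ennreal (u0 H m j w) \<partial>lborel) + ennreal \<beta> = ennreal (1 - \<beta>) + ennreal \<beta>"
    using m e2 b0 unfolding \<beta>_def by (simp add: emeasure_cell ennreal_mult[symmetric] ennreal_plus[symmetric] del: ennreal_plus)
  then have "(\<integral>\<^sup>+ w. ennreal (u0 H m j w) \<partial>lborel) = ennreal (1 - \<beta>)"
    using ennreal_add_left_cancel[of "ennreal \<beta>"] by (simp add: add.commute)
  moreover have "ennreal (1 - H / real m) \<le> ennreal (1 - \<beta>)" using bH by (intro ennreal_leI) simp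
  ultimately show ?thesis using I by simp
qed

lemma prod_mono_ennreal: "(\<And>i. i \<in> I \<Longrightarrow> f i \<le> g i) \<Longrightarrow> (\<Prod>i\<in>I. f i :: ennreal) \<le> (\<Prod>i\<in>I. g i)"
  by (induction I rule: infinite_finite_induct) (auto intro!: mult_mono)

lemma pair_bound:
  assumes E: "(\<lambda>(x, w). est x w) \<in> borel_measurable (data_space n \<Otimes>\<^sub>M borel)"
    and Epos: "\<forall>x\<in>space (data_space n). \<forall>w\<in>{0..1}. 0 < est x w"
    and m: "1 \<le> m" "j < m" and j: "j \<notin> \<sigma>" "finite \<sigma>" and H: "0 < H" and n: "1 \<le> n"
    and nH: "real n * H / real m \<le> 1/2"
  shows "ennreal ((1 - exp (-(H/8))) / 2) * ennreal (1 / (2 * real m)) * ennreal (1/2)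
    \<le> (\<integral>\<^sup>+x. (\<Prod>i<n. dens (gam (H/16) H m \<sigma>) (x i)) * Lj m j (gam (H/16) H m \<sigma>) (est x) \<partial>Phi n)
     + (\<integral>\<^sup>+x. (\<Prod>i<n. dens (gam (H/16) H m (insert j \<sigma>)) (x i)) * Lj m j (gam (H/16) H m (insert j \<sigma>)) (est x) \<partial>Phi n)"
proof -
  let ?g = "gam (H/16) H m \<sigma>" and ?g' = "gam (H/16) H m (insert j \<sigma>)"
  define K where "K = ennreal ((1 - exp (-(H/8))) / 2) * ennreal (1 / (2 * real m))"
  define g0 where "g0 = (\<lambda>(w,k). ennreal (u0 H m j w * pp (?g w) k))"
  have H0: "0 \<le> H" using H by simp
  have gpos: "0 < ?g w" "0 < ?g' w" for w using H by (auto intro!: gam_pos)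
  have [measurable]: "u0 H m j \<in> borel_measurable borel" unfolding u0_def by measurable
  have g0m[measurable]: "g0 \<in> borel_measurable NN" unfolding g0_def NN_def by (rule meas_pp) auto
  have g0_le: "g0 y \<le> dens ?g y \<and> g0 y \<le> dens ?g' y" for y
  proof -
    obtain w k where y: "y = (w, k)" by (cases y)
    show ?thesis
    proof (cases "w \<in> {0..1}")
      case False
      then show ?thesis by (simp add: y g0_def dens_def u0_def)
    next
      case True
      have pp0: "0 \<le> pp (?g w) k" using gpos by (intro pp_nonneg less_imp_le)
      have "exp (-(H * indicator (cell m j) w)) \<le> 1" using H by simp
      then have a: "u0 H m j w * pp (?g w) k \<le> indicator {0..1} w * pp (?g w) k"
        using True pp0 by (simp add: u0_def mult_left_le_one_le)
      have g': "?g' w = ?g w + bump H m j w" using gam_insert[OF j] by simp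
      have "exp (-(H * indicator (cell m j) w)) \<le> exp (-(?g' w - ?g w))"
        using bump_ind[OF H0 m(1), of j w] g' by simp
      then have "exp (-(H * indicator (cell m j) w)) * pp (?g w) k \<le> exp (-(?g' w - ?g w)) * pp (?g w) k"
        using pp0 by (rule mult_right_mono)
      also have "\<dots> \<le> pp (?g' w) k"
        using gpos g' bump_nonneg[of H m j w] by (intro pp_min) (auto intro: less_imp_le)
      finally have b: "u0 H m j w * pp (?g w) k \<le> indicator {0..1} w * pp (?g' w) k"
        using True by (simp add: u0_def)
      show ?thesis using a b by (simp add: y g0_def dens_def ennreal_leI)
    qed
  qed
  interpret P: product_sigma_finite "\<lambda>_. NN" using sf_NN by (simp add: product_sigma_finite_def)
  have Fm: "(\<lambda>x. \<Prod>i<n. dens \<gamma> (x i)) \<in> borel_measurable (Phi n)" if "\<gamma> \<in> borel_measurable borel" for \<gamma>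
    unfolding Phi_def using that by measurable
  have Gm: "(\<lambda>x. \<Prod>i<n. g0 (x i)) \<in> borel_measurable (Phi n)"
    unfolding Phi_def by measurable
  have Lm: "(\<lambda>x. Lj m j \<gamma> (est x)) \<in> borel_measurable (Phi n)" if "\<gamma> \<in> borel_measurable borel" for \<gamma>
    using Lj_meas[OF E that] .
  have intG: "(\<integral>\<^sup>+x. (\<Prod>i<n. g0 (x i)) \<partial>Phi n) = (\<integral>\<^sup>+y. g0 y \<partial>NN) ^ n"
    unfolding Phi_def by (subst P.product_nn_integral_prod) auto
  have "ennreal (1 - H / real m) \<le> (\<integral>\<^sup>+y. g0 y \<partial>NN)"
    unfolding g0_def using gpos by (intro g0_int m H) auto
  then have "ennreal (1 - H / real m) ^ n \<le> (\<integral>\<^sup>+y. g0 y \<partial>NN) ^ n" by (rule power_mono) simp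
  moreover have "ennreal (1/2) \<le> ennreal (1 - H / real m) ^ n"
  proof -
    have mpos: "0 < real m" using m by simp
    have hm: "H / real m \<le> 1/2"
    proof -
      have "1 * (H / real m) \<le> real n * (H / real m)" using n H mpos by (intro mult_right_mono) auto
      moreover have "real n * (H / real m) = real n * H / real m" by simp
      ultimately show ?thesis using nH by linarith
    qed
    have B: "1 + real n * (- (H / real m)) \<le> (1 + (- (H / real m))) ^ n"
      by (intro Bernoulli_inequality) (use hm in linarith)
    have e1: "1 + real n * (- (H / real m)) = 1 - real n * H / real m" by simp
    have e2: "1 + (- (H / real m)) = 1 - H / real m" by simp
    have "1 - real n * H / real m \<le> (1 - H / real m) ^ n" using B unfolding e1 e2 .
    then have P1: "1/2 \<le> (1 - H / real m) ^ n" using nH by linarith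
    have P0: "0 \<le> 1 - H / real m" using hm by linarith
    have le: "ennreal (1/2) \<le> ennreal ((1 - H / real m) ^ n)" by (rule ennreal_leI[OF P1])
    show ?thesis unfolding ennreal_power[OF P0] by (rule le)
  qed
  ultimately have half: "ennreal (1/2) \<le> (\<integral>\<^sup>+x. (\<Prod>i<n. g0 (x i)) \<partial>Phi n)"
    unfolding intG by simp
  have "K * ennreal (1/2) \<le> K * (\<integral>\<^sup>+x. (\<Prod>i<n. g0 (x i)) \<partial>Phi n)"
    by (rule mult_left_mono[OF half]) simp
  also have "\<dots> = (\<integral>\<^sup>+x. K * (\<Prod>i<n. g0 (x i)) \<partial>Phi n)"
    by (rule nn_integral_cmult[symmetric]) (rule Gm)
  also have "\<dots> \<le> (\<integral>\<^sup>+x. (\<Prod>i<n. dens ?g (x i)) * Lj m j ?g (est x) + (\<Prod>i<n. dens ?g' (x i)) * Lj m j ?g' (est x) \<partial>Phi n)"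
  proof (rule nn_integral_mono)
    fix x assume x: "x \<in> space (Phi n)"
    then have xd: "x \<in> space (data_space n)" by (simp add: space_Phi)
    have em: "est x \<in> borel_measurable borel" by (rule est_meas_x[OF E xd])
    have ep: "\<forall>w\<in>{0..1}. 0 < est x w" using Epos xd by blast
    have KL: "K \<le> Lj m j ?g (est x) + Lj m j ?g' (est x)"
      unfolding K_def by (rule L_pair[OF em ep m j H])
    have G1: "(\<Prod>i<n. g0 (x i)) \<le> (\<Prod>i<n. dens ?g (x i))" using g0_le by (intro prod_mono_ennreal) blast
    have G2: "(\<Prod>i<n. g0 (x i)) \<le> (\<Prod>i<n. dens ?g' (x i))" using g0_le by (intro prod_mono_ennreal) blast
    have "K * (\<Prod>i<n. g0 (x i)) \<le> (\<Prod>i<n. g0 (x i)) * (Lj m j ?g (est x) + Lj m j ?g' (est x))"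
      unfolding mult.commute[of K] by (rule mult_left_mono[OF KL]) simp
    also have "\<dots> = (\<Prod>i<n. g0 (x i)) * Lj m j ?g (est x) + (\<Prod>i<n. g0 (x i)) * Lj m j ?g' (est x)"
      by (simp add: distrib_left)
    also have "\<dots> \<le> (\<Prod>i<n. dens ?g (x i)) * Lj m j ?g (est x) + (\<Prod>i<n. dens ?g' (x i)) * Lj m j ?g' (est x)"
      using G1 G2 by (intro add_mono mult_right_mono) auto
    finally show "K * (\<Prod>i<n. g0 (x i)) \<le> (\<Prod>i<n. dens ?g (x i)) * Lj m j ?g (est x) + (\<Prod>i<n. dens ?g' (x i)) * Lj m j ?g' (est x)" .
  qed
  also have "\<dots> = (\<integral>\<^sup>+x. (\<Prod>i<n. dens ?g (x i)) * Lj m j ?g (est x) \<partial>Phi n) + (\<integral>\<^sup>+x. (\<Prod>i<n. dens ?g' (x i)) * Lj m j ?g' (est x) \<partial>Phi n)"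
    by (rule nn_integral_add) (auto intro!: borel_measurable_times_ennreal Fm Lm)
  finally show ?thesis unfolding K_def .
qed

lemma risk_ge:
  assumes E: "(\<lambda>(x, w). est x w) \<in> borel_measurable (data_space n \<Otimes>\<^sub>M borel)"
    and Epos: "\<forall>x\<in>space (data_space n). \<forall>w\<in>{0..1}. 0 < est x w"
    and m: "1 \<le> m" and H: "0 < H"
  shows "(\<Sum>j<m. \<integral>\<^sup>+x. (\<Prod>i<n. dens (gam (H/16) H m \<sigma>) (x i)) * Lj m j (gam (H/16) H m \<sigma>) (est x) \<partial>Phi n)
     \<le> risk n (gam (H/16) H m \<sigma>) est"
proof -
  let ?g = "gam (H/16) H m \<sigma>"
  let ?F = "\<lambda>x. \<Prod>i<n. dens ?g (x i)"
  have gpos: "\<forall>w\<in>{0..1}. 0 < ?g w" using H by (auto intro!: gam_pos)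
  have Fm: "?F \<in> borel_measurable (Phi n)" unfolding Phi_def by measurable
  have Lm: "(\<lambda>x. Lj m j ?g (est x)) \<in> borel_measurable (Phi n)" for j
    using Lj_meas[OF E gam_meas] .
  have "(\<Sum>j<m. \<integral>\<^sup>+x. ?F x * Lj m j ?g (est x) \<partial>Phi n) = (\<integral>\<^sup>+x. (\<Sum>j<m. ?F x * Lj m j ?g (est x)) \<partial>Phi n)"
    by (rule nn_integral_sum[symmetric]) (auto intro!: borel_measurable_times_ennreal Fm Lm)
  also have "\<dots> = (\<integral>\<^sup>+x. ?F x * (\<Sum>j<m. Lj m j ?g (est x)) \<partial>Phi n)"
    by (simp add: sum_distrib_left)
  also have "\<dots> = (\<integral>\<^sup>+x. (\<Sum>j<m. Lj m j ?g (est x)) \<partial>density (Phi n) ?F)"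
    by (rule nn_integral_density[symmetric]) (auto intro!: Fm Lm borel_measurable_sum)
  also have "\<dots> \<le> (\<integral>\<^sup>+x. poisson_loss ?g (est x) \<partial>density (Phi n) ?F)"
  proof (rule nn_integral_mono)
    fix x assume "x \<in> space (density (Phi n) ?F)"
    then have xd: "x \<in> space (data_space n)" by (simp add: space_Phi)
    show "(\<Sum>j<m. Lj m j ?g (est x)) \<le> poisson_loss ?g (est x)"
      using Epos xd gpos by (intro loss_decomp m est_meas_x[OF E xd] gam_meas) auto
  qed
  also have "\<dots> = risk n ?g est"
    unfolding risk_def PiM_obs[OF gam_meas gpos] ..
  finally show ?thesis .
qed

lemma sum_Pow_split:
  fixes f :: "nat set \<Rightarrow> ennreal"
  assumes "j \<in> S" "finite S"
  shows "(\<Sum>\<sigma>\<in>Pow S. f \<sigma>) = (\<Sum>\<sigma>\<in>Pow (S - {j}). f \<sigma> + f (insert j \<sigma>))"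
proof -
  have S: "S = insert j (S - {j})" using assms by auto
  have "Pow S = Pow (S - {j}) \<union> insert j ` Pow (S - {j})"
    by (metis S Pow_insert)
  moreover have "Pow (S - {j}) \<inter> insert j ` Pow (S - {j}) = {}" by auto
  moreover have "inj_on (insert j) (Pow (S - {j}))" by (auto simp: inj_on_def)
  ultimately have "(\<Sum>\<sigma>\<in>Pow S. f \<sigma>) = (\<Sum>\<sigma>\<in>Pow (S - {j}). f \<sigma>) + (\<Sum>\<sigma>\<in>Pow (S - {j}). f (insert j \<sigma>))"
    using assms by (simp add: sum.union_disjoint sum.reindex)
  then show ?thesis by (simp add: sum.distrib)
qed

lemma enn3: "0 \<le> a \<Longrightarrow> 0 \<le> b \<Longrightarrow> 0 \<le> c \<Longrightarrow> ennreal a * ennreal b * ennreal c = ennreal (a*b*c)"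
  by (simp add: ennreal_mult)

lemma enn_nat2: "0 \<le> x \<Longrightarrow> of_nat a * (of_nat b * ennreal x) = ennreal (real a * (real b * x))"
  by (simp add: ennreal_of_nat_eq_real_of_nat ennreal_mult)

lemma enn_nat1: "0 \<le> x \<Longrightarrow> of_nat a * ennreal x = ennreal (real a * x)"
  by (simp add: ennreal_of_nat_eq_real_of_nat ennreal_mult)

lemma sup_bound:
  assumes est: "est \<in> estimators n"
    and a0: "0 < \<alpha>" and a1: "\<alpha> \<le> 1" and M: "0 < M" and m: "1 \<le> m"
    and Hdef: "H = M * (1/(2*real m)) powr \<alpha>" and n: "1 \<le> n"
    and nH: "real n * H / real m \<le> 1/2"
  shows "ennreal ((1 - exp (-(H/8))) / 16) \<le> (\<Squnion>\<gamma>\<in>holder_class \<alpha> M. risk n \<gamma> est)"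
proof -
  have E: "(\<lambda>(x, w). est x w) \<in> borel_measurable (data_space n \<Otimes>\<^sub>M borel)"
    and Epos: "\<forall>x\<in>space (data_space n). \<forall>w\<in>{0..1}. 0 < est x w"
    using est by (auto simp: estimators_def)
  have H: "0 < H" using Hdef M m by simp
  let ?S = "{..<m}"
  define A where "A j \<sigma> = (\<integral>\<^sup>+x. (\<Prod>i<n. dens (gam (H/16) H m \<sigma>) (x i)) * Lj m j (gam (H/16) H m \<sigma>) (est x) \<partial>Phi n)" for j \<sigma>
  define K2 where "K2 = ennreal ((1 - exp (-(H/8))) / 2) * ennreal (1 / (2 * real m)) * ennreal (1/2)"
  define SUPR where "SUPR = (\<Squnion>\<gamma>\<in>holder_class \<alpha> M. risk n \<gamma> est)"
  have inH: "gam (H/16) H m \<sigma> \<in> holder_class \<alpha> M" if "\<sigma> \<in> Pow ?S" for \<sigma>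
    using that H by (intro gam_holder[OF a0 a1 M m Hdef]) (auto intro: finite_subset)
  have "(\<Sum>j<m. of_nat (2 ^ (m - 1)) * K2) \<le> (\<Sum>j<m. \<Sum>\<sigma>\<in>Pow ?S. A j \<sigma>)"
  proof (rule sum_mono)
    fix j assume j: "j \<in> ?S"
    have "card (Pow (?S - {j})) = 2 ^ (m - 1)" using j by (simp add: card_Pow)
    then have "of_nat (2 ^ (m - 1)) * K2 = (\<Sum>\<sigma>\<in>Pow (?S - {j}). K2)" by simp
    also have "\<dots> \<le> (\<Sum>\<sigma>\<in>Pow (?S - {j}). A j \<sigma> + A j (insert j \<sigma>))"
    proof (rule sum_mono)
      fix \<sigma> assume \<sigma>: "\<sigma> \<in> Pow (?S - {j})"
      show "K2 \<le> A j \<sigma> + A j (insert j \<sigma>)"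
        unfolding K2_def A_def using \<sigma> j
        by (intro pair_bound[OF E Epos m _ _ _ H n nH]) (auto intro: finite_subset)
    qed
    also have "\<dots> = (\<Sum>\<sigma>\<in>Pow ?S. A j \<sigma>)"
      using j by (intro sum_Pow_split[symmetric]) auto
    finally show "of_nat (2 ^ (m - 1)) * K2 \<le> (\<Sum>\<sigma>\<in>Pow ?S. A j \<sigma>)" .
  qed
  also have "\<dots> = (\<Sum>\<sigma>\<in>Pow ?S. \<Sum>j<m. A j \<sigma>)" by (rule sum.swap)
  also have "\<dots> \<le> (\<Sum>\<sigma>\<in>Pow ?S. risk n (gam (H/16) H m \<sigma>) est)"
    unfolding A_def by (intro sum_mono risk_ge[OF E Epos m H])
  also have "\<dots> \<le> (\<Sum>\<sigma>\<in>Pow ?S. SUPR)"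
    unfolding SUPR_def by (intro sum_mono SUP_upper inH)
  also have "\<dots> = of_nat (2 ^ m) * SUPR" by (simp add: card_Pow)
  finally have main: "(\<Sum>j<m. of_nat (2 ^ (m - 1)) * K2) \<le> of_nat (2 ^ m) * SUPR" .
  have e0: "0 \<le> 1 - exp (-(H/8))" using H by simp
  have k2: "K2 = ennreal ((1 - exp (-(H/8))) / 2 * (1 / (2 * real m)) * (1/2))"
    unfolding K2_def using e0 by (intro enn3) auto
  have "(\<Sum>j<m. of_nat (2 ^ (m - 1)) * K2) = of_nat m * (of_nat (2 ^ (m - 1)) * K2)" by simp
  also have "\<dots> = ennreal (real m * (real (2 ^ (m - 1)) * ((1 - exp (-(H/8))) / 2 * (1 / (2 * real m)) * (1/2))))"
    unfolding k2 using e0 by (intro enn_nat2) auto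
  also have "\<dots> = ennreal (real m * 2 ^ (m - 1) * ((1 - exp (-(H/8))) / 2 * (1 / (2 * real m)) * (1/2)))"
    by (simp add: mult.assoc)
  also have "real m * 2 ^ (m - 1) * ((1 - exp (-(H/8))) / 2 * (1 / (2 * real m)) * (1/2)) = 2 ^ m * ((1 - exp (-(H/8))) / 16)"
  proof -
    have "(2::real) ^ m = 2 * 2 ^ (m - 1)" using m by (cases m) auto
    then show ?thesis using m by (simp add: field_simps)
  qed
  also have "ennreal (2 ^ m * ((1 - exp (-(H/8))) / 16)) = of_nat (2 ^ m) * ennreal ((1 - exp (-(H/8))) / 16)"
    using enn_nat1[of "(1 - exp (-(H/8))) / 16" "2 ^ m"] e0 by simp
  finally have "of_nat (2 ^ m) * ennreal ((1 - exp (-(H/8))) / 16) \<le> of_nat (2 ^ m) * SUPR"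
    using main by simp
  moreover have "of_nat (2 ^ m) \<noteq> (\<top>::ennreal)" by (rule ennreal_of_nat_neq_top)
  moreover have "of_nat (2 ^ m) \<noteq> (0::ennreal)" by simp
  ultimately show ?thesis unfolding SUPR_def
    using ennreal_mult_le_mult_iff by blast
qed

theorem proposition4:
  fixes \<alpha> M :: real and n :: nat
  assumes "0 < \<alpha>" and "\<alpha> \<le> 1" and "0 < M" and "1 \<le> n"
  shows "ennreal ((1 - exp (-1)) / 144 *
           min (min (((3 * M powr (1/\<alpha>)) / (2 powr (4 + \<alpha> + 3/\<alpha>) * real n)) powr (\<alpha> / (1 + \<alpha>)))
                    (M / 8))
               (1 + sqrt 3 / 2))
         \<le> minimax_risk n (holder_class \<alpha> M)"
proof -
  define R where "R = ((3 * M powr (1/\<alpha>)) / (2 powr (4 + \<alpha> + 3/\<alpha>) * real n)) powr (\<alpha> / (1 + \<alpha>))"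
  obtain m :: nat where m: "1 \<le> m" and c: "real n * (M * (1/(2*real m)) powr \<alpha>) / real m \<le> 1/2"
    and mn: "min R (M / 8) \<le> M * (1/(2*real m)) powr \<alpha>"
    using numeric_core[OF assms] unfolding R_def by blast
  define H where "H = M * (1/(2*real m)) powr \<alpha>"
  have H0: "0 \<le> H" using assms(3) by (simp add: H_def)
  have cH: "real n * H / real m \<le> 1/2" using c unfolding H_def .
  have B: "ennreal ((1 - exp (-(H/8))) / 16) \<le> minimax_risk n (holder_class \<alpha> M)"
    unfolding minimax_risk_def
  proof (rule INF_greatest)
    fix est assume "est \<in> estimators n"
    then show "ennreal ((1 - exp (-(H/8))) / 16) \<le> (\<Squnion>\<gamma>\<in>holder_class \<alpha> M. risk n \<gamma> est)"
      by (rule sup_bound[OF _ assms(1,2,3) m H_def assms(4) cH])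
  qed
  define q where "q = 1 - exp (-1::real)"
  have q0: "0 \<le> q" by (simp add: q_def)
  have eb: "q * min (H/8) 1 \<le> 1 - exp (-(H/8))" unfolding q_def using H0 by (intro exp_bound) simp
  have s3: "sqrt 3 \<le> (3::real)"
  proof (rule ccontr)
    assume "\<not> sqrt 3 \<le> (3::real)"
    then have "3 < sqrt (3::real)" by simp
    then have "3 * 3 < sqrt 3 * sqrt (3::real)" by (intro mult_strict_mono) auto
    then show False by simp
  qed
  have key: "min (min R (M / 8)) (1 + sqrt 3 / 2) \<le> 9 * min (H/8) 1"
  proof (cases "H/8 \<le> 1")
    case True
    then have "9 * min (H/8) 1 = 9 * H / 8" by simp
    moreover have "min R (M/8) \<le> H" using mn H_def by simp
    ultimately show ?thesis using H0 by linarith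
  next
    case False
    then show ?thesis using s3 by linarith
  qed
  have "q / 144 * min (min R (M / 8)) (1 + sqrt 3 / 2) \<le> q / 144 * (9 * min (H/8) 1)"
    using q0 key by (intro mult_left_mono) auto
  also have "\<dots> = q * min (H/8) 1 / 16" by simp
  also have "\<dots> \<le> (1 - exp (-(H/8))) / 16" using eb by simp
  finally have "q / 144 * min (min R (M / 8)) (1 + sqrt 3 / 2) \<le> (1 - exp (-(H/8))) / 16" .
  then have "ennreal (q / 144 * min (min R (M / 8)) (1 + sqrt 3 / 2)) \<le> ennreal ((1 - exp (-(H/8))) / 16)"
    by (rule ennreal_leI)
  then show ?thesis using B unfolding q_def R_def by (rule order.trans)
qed

end
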